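(* For every integer $n\geq 0$, $$C_3(n+1)=\sum_{i=0}^{n}\binom{n}{i}E_3(i),$$ with the convention $E_3(0)=1$.
   Context: The arc diagram of a set partition $P$ of $[n]=\{1,\ldots,n\}$: place nodes $1,\ldots,n$ on a line and draw an arc $(i,j)$, $i<j$, whenever $i$ and $j$ lie in the same block of $P$ and no element $l$ of that block satisfies $i<l<j$. A $3$-crossing of $P$ is a triple of arcs $(i_1,j_1),(i_2,j_2),(i_3,j_3)$ with $i_1<i_2<i_3<j_1<j_2<j_3$; an enhanced $3$-crossing is such a triple with $i_1<i_2<i_3\leq j_1<j_2<j_3$. $C_3(n)$ (resp. $E_3(n)$) is the number of partitions of $[n]$ with no $3$-crossing (resp. no enhanced $3$-crossing). *)

theory Defs
  imports Main
begin

definition is_set_partition :: "nat set \<Rightarrow> nat set set \<Rightarrow> bool" where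
  "is_set_partition A P \<longleftrightarrow>
     (\<forall>B\<in>P. B \<noteq> {}) \<and> \<Union>P = A \<and> (\<forall>B\<in>P. \<forall>B'\<in>P. B \<noteq> B' \<longrightarrow> B \<inter> B' = {})"

definition arc :: "nat set set \<Rightarrow> nat \<Rightarrow> nat \<Rightarrow> bool" where
  "arc P i j \<longleftrightarrow> i < j \<and> (\<exists>B\<in>P. i \<in> B \<and> j \<in> B \<and> (\<forall>l\<in>B. \<not> (i < l \<and> l < j)))"

definition has_3_crossing :: "nat set set \<Rightarrow> bool" where
  "has_3_crossing P \<longleftrightarrow> (\<exists>i1 j1 i2 j2 i3 j3.
      arc P i1 j1 \<and> arc P i2 j2 \<and> arc P i3 j3 \<and>
      i1 < i2 \<and> i2 < i3 \<and> i3 < j1 \<and> j1 < j2 \<and> j2 < j3)"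

definition has_enhanced_3_crossing :: "nat set set \<Rightarrow> bool" where
  "has_enhanced_3_crossing P \<longleftrightarrow> (\<exists>i1 j1 i2 j2 i3 j3.
      arc P i1 j1 \<and> arc P i2 j2 \<and> arc P i3 j3 \<and>
      i1 < i2 \<and> i2 < i3 \<and> i3 \<le> j1 \<and> j1 < j2 \<and> j2 < j3)"

definition C3 :: "nat \<Rightarrow> nat" where
  "C3 n = card {P. is_set_partition {1..n} P \<and> \<not> has_3_crossing P}"

text \<open>For n = 0 the only partition of the empty set is the empty partition, so E3 0 = 1,
  matching the paper's convention.\<close>
definition E3 :: "nat \<Rightarrow> nat" where
  "E3 n = card {P. is_set_partition {1..n} P \<and> \<not> has_enhanced_3_crossing P}"

end

theory Submission imports Defs begin

definition arcrel :: "nat set \<Rightarrow> (nat \<times> nat) set \<Rightarrow> bool" where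
  "arcrel A R \<longleftrightarrow> R \<subseteq> A \<times> A \<and> (\<forall>i j. (i,j)\<in>R \<longrightarrow> i<j)
     \<and> (\<forall>i j k. (i,j)\<in>R \<longrightarrow> (i,k)\<in>R \<longrightarrow> j=k)
     \<and> (\<forall>i j k. (i,k)\<in>R \<longrightarrow> (j,k)\<in>R \<longrightarrow> i=j)"

definition cr3 :: "(nat \<times> nat) set \<Rightarrow> bool" where
  "cr3 R \<longleftrightarrow> (\<exists>i1 j1 i2 j2 i3 j3. (i1,j1)\<in>R \<and> (i2,j2)\<in>R \<and> (i3,j3)\<in>R \<and>
      i1 < i2 \<and> i2 < i3 \<and> i3 < j1 \<and> j1 < j2 \<and> j2 < j3)"

definition en3 :: "(nat \<times> nat) set \<Rightarrow> bool" where
  "en3 R \<longleftrightarrow> (\<exists>i1 j1 i2 j2 i3 j3. (i1,j1)\<in>R \<and> (i2,j2)\<in>R \<and> (i3,j3)\<in>R \<and>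
      i1 < i2 \<and> i2 < i3 \<and> i3 \<le> j1 \<and> j1 < j2 \<and> j2 < j3)"

definition arcs :: "nat set set \<Rightarrow> (nat \<times> nat) set" where
  "arcs P = {(i,j). arc P i j}"

lemma cr3_arcs: "has_3_crossing P = cr3 (arcs P)"
  by (simp add: has_3_crossing_def cr3_def arcs_def)

lemma en3_arcs: "has_enhanced_3_crossing P = en3 (arcs P)"
  by (simp add: has_enhanced_3_crossing_def en3_def arcs_def)

lemma same_block:
  assumes "is_set_partition A P" "B \<in> P" "B' \<in> P" "x \<in> B" "x \<in> B'"
  shows "B = B'"
  using assms unfolding is_set_partition_def by blast

lemma arcs_arcrel:
  assumes P: "is_set_partition A P" shows "arcrel A (arcs P)"
  unfolding arcrel_def
proof (intro conjI allI impI)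
  show "arcs P \<subseteq> A \<times> A"
    using P unfolding arcs_def arc_def is_set_partition_def by blast
next
  fix i j assume "(i,j) \<in> arcs P" then show "i < j" by (simp add: arcs_def arc_def)
next
  fix i j k assume a: "(i,j) \<in> arcs P" "(i,k) \<in> arcs P"
  then obtain B B' where B: "B\<in>P" "i\<in>B" "j\<in>B" "\<forall>l\<in>B. \<not>(i<l \<and> l<j)" "i<j"
    and B': "B'\<in>P" "i\<in>B'" "k\<in>B'" "\<forall>l\<in>B'. \<not>(i<l \<and> l<k)" "i<k"
    by (auto simp: arcs_def arc_def)
  have "B = B'" using same_block[OF P B(1) B'(1) B(2) B'(2)] .
  then show "j = k" using B B' by (metis linorder_neqE_nat)
next
  fix i j k assume a: "(i,k) \<in> arcs P" "(j,k) \<in> arcs P"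
  then obtain B B' where B: "B\<in>P" "i\<in>B" "k\<in>B" "\<forall>l\<in>B. \<not>(i<l \<and> l<k)" "i<k"
    and B': "B'\<in>P" "j\<in>B'" "k\<in>B'" "\<forall>l\<in>B'. \<not>(j<l \<and> l<k)" "j<k"
    by (auto simp: arcs_def arc_def)
  have "B = B'" using same_block[OF P B(1) B'(1) B(3) B'(3)] .
  then show "i = j" using B B' by (metis linorder_neqE_nat)
qed

lemma block_path:
  assumes P: "is_set_partition A P" and B: "B \<in> P"
  shows "x \<in> B \<Longrightarrow> y \<in> B \<Longrightarrow> x \<le> y \<Longrightarrow> (x,y) \<in> (arcs P)\<^sup>*"
proof (induction "y - x" arbitrary: x rule: less_induct)
  case less
  show ?case
  proof (cases "x = y")
    case True then show ?thesis by simp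
  next
    case False
    define z where "z = (LEAST l. l \<in> B \<and> x < l)"
    have ex: "y \<in> B \<and> x < y" using less False by auto
    have z: "z\<in>B \<and> x<z" using LeastI[of "\<lambda>l. l\<in>B \<and> x<l" y] ex z_def by auto
    have zy: "z \<le> y" using Least_le[of "\<lambda>l. l\<in>B \<and> x<l" y] ex z_def by auto
    have nob: "\<forall>l\<in>B. \<not>(x<l \<and> l<z)" using not_less_Least z_def by blast
    have "arc P x z" using z nob B less.prems(1) by (auto simp: arc_def)
    then have xz: "(x,z) \<in> arcs P" by (simp add: arcs_def)
    have "(z,y) \<in> (arcs P)\<^sup>*" using less.hyps[of z] z zy less.prems ex by auto
    then show ?thesis using xz by (meson converse_rtrancl_into_rtrancl)
  qed
qed

definition cls :: "(nat \<times> nat) set \<Rightarrow> nat \<Rightarrow> nat set" where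
  "cls R x = {y. (x,y) \<in> (R \<union> R\<inverse>)\<^sup>*}"

lemma block_cls:
  assumes P: "is_set_partition A P" and B: "B \<in> P" and x: "x \<in> B"
  shows "B = cls (arcs P) x"
proof
  show "B \<subseteq> cls (arcs P) x"
  proof
    fix y assume y: "y \<in> B"
    show "y \<in> cls (arcs P) x"
    proof (cases "x \<le> y")
      case True
      then have "(x,y) \<in> (arcs P)\<^sup>*" using block_path[OF P B x y] by simp
      then show ?thesis unfolding cls_def by (metis Un_upper1 mem_Collect_eq rtrancl_mono subsetD)
    next
      case False
      then have "(y,x) \<in> (arcs P)\<^sup>*" using block_path[OF P B y x] by simp
      then have "(x,y) \<in> ((arcs P)\<inverse>)\<^sup>*" by (simp add: rtrancl_converseI)
      then show ?thesis unfolding cls_def by (metis Un_upper2 mem_Collect_eq rtrancl_mono subsetD)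
    qed
  qed
next
  show "cls (arcs P) x \<subseteq> B"
  proof
    fix y assume "y \<in> cls (arcs P) x"
    then have "(x,y) \<in> (arcs P \<union> (arcs P)\<inverse>)\<^sup>*" by (simp add: cls_def)
    then show "y \<in> B"
    proof (induction rule: rtrancl_induct)
      case base then show ?case using x .
    next
      case (step y z)
      then obtain B' where B': "B'\<in>P" "y\<in>B'" "z\<in>B'"
        by (auto simp: arcs_def arc_def)
      have "B' = B" using same_block[OF P B'(1) B B'(2) step.IH] .
      then show ?case using B'(3) by simp
    qed
  qed
qed

lemma arcs_inj:
  assumes P: "is_set_partition A P" and P': "is_set_partition A P'" and e: "arcs P = arcs P'"
  shows "P \<subseteq> P'"
proof
  fix B assume B: "B \<in> P"
  have ne: "B \<noteq> {}" using P B unfolding is_set_partition_def by blast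
  then obtain x where x: "x \<in> B" by blast
  have "\<Union>P = A" "\<Union>P' = A" using P P' unfolding is_set_partition_def by blast+
  then have "x \<in> \<Union>P'" using B x by blast
  then obtain B' where B': "B' \<in> P'" "x \<in> B'" by blast
  have 1: "B = cls (arcs P) x" by (rule block_cls[OF P B x])
  have 2: "B' = cls (arcs P') x" by (rule block_cls[OF P' B'])
  have "B = B'" unfolding 1 2 e ..
  then show "B \<in> P'" using B' by simp
qed

section \<open>From arc relations to partitions\<close>

lemma rt_le: assumes "arcrel A R" shows "(x,y) \<in> R\<^sup>* \<Longrightarrow> x \<le> y"
proof (induction rule: rtrancl_induct)
  case base then show ?case by simp
next
  case (step y z) then show ?case using assms unfolding arcrel_def by fastforce
qed

lemma rt_sym_dir:
  assumes R: "arcrel A R"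
  shows "(x,y) \<in> (R \<union> R\<inverse>)\<^sup>* \<Longrightarrow> (x,y) \<in> R\<^sup>* \<or> (y,x) \<in> R\<^sup>*"
proof (induction rule: rtrancl_induct)
  case base then show ?case by simp
next
  case (step y z)
  have fw: "\<And>a b c. (a,b)\<in>R \<Longrightarrow> (a,c)\<in>R \<Longrightarrow> b = c"
   and bw: "\<And>a b c. (a,c)\<in>R \<Longrightarrow> (b,c)\<in>R \<Longrightarrow> a = b" using R unfolding arcrel_def by blast+
  from step.hyps(2) consider "(y,z)\<in>R" | "(z,y)\<in>R" by blast
  then show ?case
  proof cases
    case 1
    from step.IH show ?thesis
    proof
      assume "(x,y)\<in>R\<^sup>*" then show ?thesis using 1 by auto
    next
      assume yx: "(y,x)\<in>R\<^sup>*"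
      show ?thesis
      proof (cases "y = x")
        case True then show ?thesis using 1 by auto
      next
        case False
        then obtain w where "(y,w)\<in>R" "(w,x)\<in>R\<^sup>*" using yx by (meson converse_rtranclE)
        then show ?thesis using fw[OF 1] by auto
      qed
    qed
  next
    case 2
    from step.IH show ?thesis
    proof
      assume "(y,x)\<in>R\<^sup>*" then show ?thesis using 2 by (meson converse_rtrancl_into_rtrancl)
    next
      assume xy: "(x,y)\<in>R\<^sup>*"
      show ?thesis
      proof (cases "x = y")
        case True then show ?thesis using 2 by auto
      next
        case False
        then obtain w where "(x,w)\<in>R\<^sup>*" "(w,y)\<in>R" using xy by (meson rtranclE)
        then show ?thesis using bw[OF 2] by auto
      qed
    qed
  qed
qed

lemma rt_to_sym:
  assumes "(x,y) \<in> R\<^sup>* \<or> (y,x) \<in> R\<^sup>*" shows "(x,y) \<in> (R \<union> R\<inverse>)\<^sup>*"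
proof -
  have a: "R\<^sup>* \<subseteq> (R \<union> R\<inverse>)\<^sup>*" by (simp add: rtrancl_mono)
  have b: "(R\<inverse>)\<^sup>* \<subseteq> (R \<union> R\<inverse>)\<^sup>*" by (simp add: rtrancl_mono)
  show ?thesis
  proof (cases "(x,y) \<in> R\<^sup>*")
    case True then show ?thesis using a by blast
  next
    case False then have "(y,x) \<in> R\<^sup>*" using assms by blast
    then have "(x,y) \<in> (R\<inverse>)\<^sup>*" by (rule rtrancl_converseI)
    then show ?thesis using b by blast
  qed
qed

lemma cls_sym: assumes R: "arcrel A R" and "y \<in> cls R x" shows "x \<in> cls R y"
proof -
  have "(x,y) \<in> (R \<union> R\<inverse>)\<^sup>*" using assms(2) by (simp add: cls_def)
  then have "(x,y) \<in> R\<^sup>* \<or> (y,x) \<in> R\<^sup>*" by (rule rt_sym_dir[OF R])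
  then have "(y,x) \<in> R\<^sup>* \<or> (x,y) \<in> R\<^sup>*" by blast
  then have "(y,x) \<in> (R \<union> R\<inverse>)\<^sup>*" by (rule rt_to_sym)
  then show ?thesis by (simp add: cls_def)
qed

lemma cls_trans: assumes "y \<in> cls R x" "z \<in> cls R y" shows "z \<in> cls R x"
proof -
  have "(x,y) \<in> (R \<union> R\<inverse>)\<^sup>*" "(y,z) \<in> (R \<union> R\<inverse>)\<^sup>*" using assms by (simp_all add: cls_def)
  then have "(x,z) \<in> (R \<union> R\<inverse>)\<^sup>*" by (rule rtrancl_trans)
  then show ?thesis by (simp add: cls_def)
qed

lemma cls_sub: assumes R: "arcrel A R" and x: "x \<in> A" shows "cls R x \<subseteq> A"
proof
  fix y assume "y \<in> cls R x"
  then have "(x,y) \<in> (R \<union> R\<inverse>)\<^sup>*" by (simp add: cls_def)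
  then show "y \<in> A"
  proof (induction rule: rtrancl_induct)
    case base then show ?case using x .
  next
    case (step y z) then show ?case using R unfolding arcrel_def by blast
  qed
qed

lemma cls_self: "x \<in> cls R x" by (simp add: cls_def)

lemma cls_part: assumes R: "arcrel A R" shows "is_set_partition A (cls R ` A)"
  unfolding is_set_partition_def
proof (intro conjI)
  show "\<forall>B\<in>cls R ` A. B \<noteq> {}" using cls_self by blast
  show "\<Union> (cls R ` A) = A" using cls_self cls_sub[OF R] by blast
  show "\<forall>B\<in>cls R ` A. \<forall>B'\<in>cls R ` A. B \<noteq> B' \<longrightarrow> B \<inter> B' = {}"
  proof (intro ballI impI)
    fix B B' assume "B \<in> cls R ` A" "B' \<in> cls R ` A" "B \<noteq> B'"
    then obtain x y where xy: "B = cls R x" "B' = cls R y" by blast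
    show "B \<inter> B' = {}"
    proof (rule ccontr)
      assume "B \<inter> B' \<noteq> {}"
      then obtain z where z: "z \<in> cls R x" "z \<in> cls R y" using xy by blast
      have "cls R x = cls R y"
      proof
        show "cls R x \<subseteq> cls R y"
        proof
          fix w assume "w \<in> cls R x"
          have "x \<in> cls R z" by (rule cls_sym[OF R z(1)])
          then have "x \<in> cls R y" by (rule cls_trans[OF z(2)])
          then show "w \<in> cls R y" using cls_trans \<open>w \<in> cls R x\<close> by blast
        qed
        show "cls R y \<subseteq> cls R x"
        proof
          fix w assume "w \<in> cls R y"
          have "y \<in> cls R z" by (rule cls_sym[OF R z(2)])
          then have "y \<in> cls R x" by (rule cls_trans[OF z(1)])
          then show "w \<in> cls R x" using cls_trans \<open>w \<in> cls R y\<close> by blast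
        qed
      qed
      then show False using xy \<open>B \<noteq> B'\<close> by simp
    qed
  qed
qed

lemma cls_arcs: assumes R: "arcrel A R" shows "arcs (cls R ` A) = R"
proof -
  have fw: "\<And>a b c. (a,b)\<in>R \<Longrightarrow> (a,c)\<in>R \<Longrightarrow> b = c"
   and lt: "\<And>a b. (a,b)\<in>R \<Longrightarrow> a < b"
   and sub: "R \<subseteq> A \<times> A" using R unfolding arcrel_def by blast+
  show ?thesis
  proof (intro set_eqI iffI)
    fix p assume "p \<in> arcs (cls R ` A)"
    then obtain i j where p: "p = (i,j)" and a: "arc (cls R ` A) i j" by (auto simp: arcs_def)
    then obtain x where x: "x \<in> A" "i \<in> cls R x" "j \<in> cls R x" "i < j"
      and nob: "\<forall>l\<in>cls R x. \<not>(i<l \<and> l<j)" by (auto simp: arc_def)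
    have "j \<in> cls R i" using x cls_sym[OF R] cls_trans by blast
    then have "(i,j) \<in> R\<^sup>* \<or> (j,i) \<in> R\<^sup>*" using rt_sym_dir[OF R] by (simp add: cls_def)
    then have ij: "(i,j) \<in> R\<^sup>*" using rt_le[OF R, of j i] x(4) by auto
    obtain w where w: "(i,w)\<in>R" "(w,j)\<in>R\<^sup>*" using converse_rtranclE[OF ij] x(4) by blast
    have "w \<in> cls R i" using w(1) unfolding cls_def by blast
    then have "w \<in> cls R x" using x cls_trans by blast
    moreover have "i < w" "w \<le> j" using lt w(1) rt_le[OF R w(2)] by auto
    ultimately have "w = j" using nob by fastforce
    then show "p \<in> R" using p w by simp
  next
    fix p assume pR: "p \<in> R"
    then obtain i j where p: "p = (i,j)" by (cases p)
    have ij: "(i,j) \<in> R" "i < j" "i \<in> A" using pR p lt sub by auto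
    have jc: "j \<in> cls R i" using ij unfolding cls_def by blast
    have "\<forall>l\<in>cls R i. \<not>(i<l \<and> l<j)"
    proof (intro ballI notI)
      fix l assume l: "l \<in> cls R i" "i < l \<and> l < j"
      then have "(i,l) \<in> R\<^sup>* \<or> (l,i) \<in> R\<^sup>*" using rt_sym_dir[OF R] by (simp add: cls_def)
      then have il: "(i,l) \<in> R\<^sup>*" using rt_le[OF R, of l i] l by auto
      obtain w where w: "(i,w)\<in>R" "(w,l)\<in>R\<^sup>*" using converse_rtranclE[OF il] l by blast
      have "w = j" using fw[OF w(1) ij(1)] .
      then show False using rt_le[OF R w(2)] l by simp
    qed
    then have "arc (cls R ` A) i j" using ij jc cls_self unfolding arc_def by blast
    then show "p \<in> arcs (cls R ` A)" using p by (simp add: arcs_def)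
  qed
qed

lemma card_part_arcs:
  assumes "\<And>P. Q P = Q' (arcs P)"
  shows "card {P. is_set_partition A P \<and> \<not> Q P} = card {R. arcrel A R \<and> \<not> Q' R}"
proof -
  have inj: "inj_on arcs {P. is_set_partition A P \<and> \<not> Q P}"
  proof (rule inj_onI)
    fix P P' assume "P \<in> {P. is_set_partition A P \<and> \<not> Q P}" "P' \<in> {P. is_set_partition A P \<and> \<not> Q P}"
      "arcs P = arcs P'"
    then show "P = P'" using arcs_inj[of A P P'] arcs_inj[of A P' P] by auto
  qed
  have img: "arcs ` {P. is_set_partition A P \<and> \<not> Q P} = {R. arcrel A R \<and> \<not> Q' R}"
  proof (intro set_eqI iffI)
    fix R assume "R \<in> arcs ` {P. is_set_partition A P \<and> \<not> Q P}"
    then show "R \<in> {R. arcrel A R \<and> \<not> Q' R}" using arcs_arcrel assms by auto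
  next
    fix R assume "R \<in> {R. arcrel A R \<and> \<not> Q' R}"
    then have R: "arcrel A R" "\<not> Q' R" by auto
    show "R \<in> arcs ` {P. is_set_partition A P \<and> \<not> Q P}"
    proof (rule image_eqI)
      show "R = arcs (cls R ` A)" using cls_arcs[OF R(1)] by simp
      show "cls R ` A \<in> {P. is_set_partition A P \<and> \<not> Q P}"
        using cls_part[OF R(1)] cls_arcs[OF R(1)] assms R(2) by simp
    qed
  qed
  show ?thesis using card_image[OF inj] img by simp
qed


definition shift :: "(nat \<times> nat) set \<Rightarrow> (nat \<times> nat) set" where
  "shift Q = {(i,j). (i, Suc j) \<in> Q \<and> i < j}"

definition unshift :: "(nat \<times> nat) set \<Rightarrow> nat set \<Rightarrow> (nat \<times> nat) set" where
  "unshift R U = {(i,j). (\<exists>k. j = Suc k \<and> (i,k) \<in> R) \<or> (i \<in> U \<and> j = Suc i)}"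

lemma shiftI: assumes "(a,b) \<in> Q" "Suc a < b" shows "(a, b - 1) \<in> shift Q"
proof -
  have e: "Suc (b - 1) = b" using assms(2) by simp
  have "a < b - 1" using assms(2) by simp
  then show ?thesis using assms(1) e unfolding shift_def by simp
qed

lemma cr3_shift: "cr3 Q \<longleftrightarrow> en3 (shift Q)"
proof
  assume "cr3 Q"
  then obtain i1 j1 i2 j2 i3 j3 where h: "(i1,j1)\<in>Q" "(i2,j2)\<in>Q" "(i3,j3)\<in>Q"
      "i1 < i2" "i2 < i3" "i3 < j1" "j1 < j2" "j2 < j3" unfolding cr3_def by blast
  have s: "(i1, j1 - 1) \<in> shift Q" "(i2, j2 - 1) \<in> shift Q" "(i3, j3 - 1) \<in> shift Q"
    using shiftI[OF h(1)] shiftI[OF h(2)] shiftI[OF h(3)] h(4-8) by simp_all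
  have a: "i3 \<le> j1 - 1" "j1 - 1 < j2 - 1" "j2 - 1 < j3 - 1" using h(4-8) by simp_all
  show "en3 (shift Q)" unfolding en3_def using s a h(4,5) by blast
next
  assume "en3 (shift Q)"
  then obtain i1 j1 i2 j2 i3 j3 where h: "(i1,j1)\<in>shift Q" "(i2,j2)\<in>shift Q" "(i3,j3)\<in>shift Q"
      "i1 < i2" "i2 < i3" "i3 \<le> j1" "j1 < j2" "j2 < j3" unfolding en3_def by blast
  have s: "(i1, Suc j1) \<in> Q" "(i2, Suc j2) \<in> Q" "(i3, Suc j3) \<in> Q" using h(1-3) by (simp_all add: shift_def)
  have a: "i3 < Suc j1" "Suc j1 < Suc j2" "Suc j2 < Suc j3" using h(4-8) by simp_all
  show "cr3 Q" unfolding cr3_def using s a h(4,5) by blast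
qed

definition Good :: "nat set \<Rightarrow> (nat \<times> nat) set set" where
  "Good S = {R. arcrel S R \<and> \<not> en3 R}"

definition Phi :: "nat \<Rightarrow> (nat \<times> nat) set \<Rightarrow> nat set \<times> (nat \<times> nat) set" where
  "Phi n Q = ({1..n} - {v. (v, Suc v) \<in> Q}, shift Q)"

definition Psi :: "nat \<Rightarrow> nat set \<times> (nat \<times> nat) set \<Rightarrow> (nat \<times> nat) set" where
  "Psi n p = unshift (snd p) ({1..n} - fst p)"

lemma phi_in:
  assumes Q: "arcrel {1..Suc n} Q" and nc: "\<not> cr3 Q"
  shows "Phi n Q \<in> Sigma (Pow {1..n}) Good"
proof -
  have sub: "Q \<subseteq> {1..Suc n} \<times> {1..Suc n}" and lt: "\<And>a b. (a,b)\<in>Q \<Longrightarrow> a < b"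
   and fw: "\<And>a b c. (a,b)\<in>Q \<Longrightarrow> (a,c)\<in>Q \<Longrightarrow> b = c"
   and bw: "\<And>a b c. (a,c)\<in>Q \<Longrightarrow> (b,c)\<in>Q \<Longrightarrow> a = b" using Q unfolding arcrel_def by blast+
  define S where "S = {1..n} - {v. (v, Suc v) \<in> Q}"
  have "arcrel S (shift Q)" unfolding arcrel_def
  proof (intro conjI allI impI)
    show "shift Q \<subseteq> S \<times> S"
    proof
      fix p assume "p \<in> shift Q"
      then obtain i j where p: "p = (i,j)" "(i, Suc j) \<in> Q" "i < j" by (auto simp: shift_def)
      have r: "i \<ge> 1" "Suc j \<le> Suc n" using sub p by auto
      have "(i, Suc i) \<notin> Q" using fw[OF p(2)] p(3) by fastforce
      moreover have "(j, Suc j) \<notin> Q" using bw[OF p(2)] p(3) by fastforce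
      ultimately show "p \<in> S \<times> S" using p r unfolding S_def by auto
    qed
  next
    fix i j assume "(i,j) \<in> shift Q" then show "i < j" by (simp add: shift_def)
  next
    fix i j k assume "(i,j) \<in> shift Q" "(i,k) \<in> shift Q"
    then show "j = k" using fw by (auto simp: shift_def)
  next
    fix i j k assume "(i,k) \<in> shift Q" "(j,k) \<in> shift Q"
    then show "i = j" using bw by (auto simp: shift_def)
  qed
  moreover have "\<not> en3 (shift Q)" using nc cr3_shift by simp
  ultimately show ?thesis unfolding Phi_def Good_def S_def by auto
qed

lemma psi_in:
  assumes SR: "(S,R) \<in> Sigma (Pow {1..n}) Good"
  shows "arcrel {1..Suc n} (Psi n (S,R)) \<and> \<not> cr3 (Psi n (S,R))"
proof -
  have S: "S \<subseteq> {1..n}" and R: "arcrel S R" and ne: "\<not> en3 R" using SR by (auto simp: Good_def)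
  have sub: "R \<subseteq> S \<times> S" and lt: "\<And>a b. (a,b)\<in>R \<Longrightarrow> a < b"
   and fw: "\<And>a b c. (a,b)\<in>R \<Longrightarrow> (a,c)\<in>R \<Longrightarrow> b = c"
   and bw: "\<And>a b c. (a,c)\<in>R \<Longrightarrow> (b,c)\<in>R \<Longrightarrow> a = b" using R unfolding arcrel_def by blast+
  define U where "U = {1..n} - S"
  have PS: "Psi n (S,R) = unshift R U" by (simp add: Psi_def U_def)
  have sh: "shift (unshift R U) = R" using lt by (auto simp: shift_def unshift_def)
  have "arcrel {1..Suc n} (unshift R U)" unfolding arcrel_def
  proof (intro conjI allI impI)
    show "unshift R U \<subseteq> {1..Suc n} \<times> {1..Suc n}"
      using sub S unfolding unshift_def U_def by force
  next
    fix i j assume "(i,j) \<in> unshift R U" then show "i < j" using lt unfolding unshift_def by (auto simp: less_Suc_eq)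
  next
    fix i j k assume "(i,j) \<in> unshift R U" "(i,k) \<in> unshift R U"
    then show "j = k" using fw sub unfolding unshift_def U_def by blast
  next
    fix i j k assume "(i,k) \<in> unshift R U" "(j,k) \<in> unshift R U"
    then show "i = j" using bw sub unfolding unshift_def U_def by blast
  qed
  moreover have "\<not> cr3 (unshift R U)" using ne cr3_shift sh by simp
  ultimately show ?thesis using PS by simp
qed

lemma phi_bij: "bij_betw (Phi n) {Q. arcrel {1..Suc n} Q \<and> \<not> cr3 Q} (Sigma (Pow {1..n}) Good)"
proof (rule bij_betw_byWitness[where f' = "Psi n"])
  show "\<forall>a\<in>{Q. arcrel {1..Suc n} Q \<and> \<not> cr3 Q}. Psi n (Phi n a) = a"
  proof
    fix Q assume "Q \<in> {Q. arcrel {1..Suc n} Q \<and> \<not> cr3 Q}"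
    then have sub: "Q \<subseteq> {1..Suc n} \<times> {1..Suc n}" and lt: "\<And>a b. (a,b)\<in>Q \<Longrightarrow> a < b"
      unfolding arcrel_def by blast+
    show "Psi n (Phi n Q) = Q"
    proof (intro set_eqI iffI)
      fix p assume "p \<in> Psi n (Phi n Q)"
      then show "p \<in> Q" by (auto simp: Psi_def Phi_def unshift_def shift_def)
    next
      fix p assume pQ: "p \<in> Q"
      obtain i j where p: "p = (i,j)" by (cases p)
      have ij: "i < j" "1 \<le> i" "j \<le> Suc n" using pQ p lt sub by auto
      then obtain k where k: "j = Suc k" by (cases j) auto
      show "p \<in> Psi n (Phi n Q)"
      proof (cases "i < k")
        case True then show ?thesis using pQ p k by (auto simp: Psi_def Phi_def unshift_def shift_def)
      next
        case False then have "i = k" using ij k by simp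
        then show ?thesis using pQ p k ij by (auto simp: Psi_def Phi_def unshift_def shift_def)
      qed
    qed
  qed
next
  show "\<forall>a'\<in>Sigma (Pow {1..n}) Good. Phi n (Psi n a') = a'"
  proof
    fix a' assume a: "a' \<in> Sigma (Pow {1..n}) Good"
    obtain S R where SR: "a' = (S,R)" by (cases a')
    have S: "S \<subseteq> {1..n}" and R: "arcrel S R" using a SR by (auto simp: Good_def)
    have lt: "\<And>a b. (a,b)\<in>R \<Longrightarrow> a < b" using R unfolding arcrel_def by blast
    have 1: "{v. (v, Suc v) \<in> unshift R ({1..n} - S)} = {1..n} - S"
      using lt by (auto simp: unshift_def)
    have 2: "shift (unshift R ({1..n} - S)) = R" using lt by (auto simp: shift_def unshift_def)
    show "Phi n (Psi n a') = a'" using 1 2 S SR by (auto simp: Phi_def Psi_def)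
  qed
next
  show "Phi n ` {Q. arcrel {1..Suc n} Q \<and> \<not> cr3 Q} \<subseteq> Sigma (Pow {1..n}) Good"
    using phi_in by blast
next
  show "Psi n ` Sigma (Pow {1..n}) Good \<subseteq> {Q. arcrel {1..Suc n} Q \<and> \<not> cr3 Q}"
    using psi_in by force
qed


lemma map_arcrel:
  assumes g: "\<And>x y. x\<in>A \<Longrightarrow> y\<in>A \<Longrightarrow> x<y \<Longrightarrow> g x < g y" and R: "arcrel A R"
  shows "arcrel (g`A) (map_prod g g ` R)"
proof -
  have sub: "R \<subseteq> A \<times> A" and lt: "\<And>a b. (a,b)\<in>R \<Longrightarrow> a < b"
   and fw: "\<And>a b c. (a,b)\<in>R \<Longrightarrow> (a,c)\<in>R \<Longrightarrow> b = c"
   and bw: "\<And>a b c. (a,c)\<in>R \<Longrightarrow> (b,c)\<in>R \<Longrightarrow> a = b" using R unfolding arcrel_def by blast+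
  have inj: "\<And>x y. x\<in>A \<Longrightarrow> y\<in>A \<Longrightarrow> g x = g y \<Longrightarrow> x = y"
  proof -
    fix x y assume "x\<in>A" "y\<in>A" "g x = g y"
    then show "x = y" by (cases x y rule: linorder_cases) (auto dest: g)
  qed
  show ?thesis unfolding arcrel_def
  proof (intro conjI allI impI)
    show "map_prod g g ` R \<subseteq> g ` A \<times> g ` A" using sub by auto
  next
    fix i j assume "(i,j) \<in> map_prod g g ` R"
    then obtain a b where "(a,b)\<in>R" "i = g a" "j = g b" by auto
    then show "i < j" using g lt sub by blast
  next
    fix i j k assume "(i,j) \<in> map_prod g g ` R" "(i,k) \<in> map_prod g g ` R"
    then obtain a b a' b' where h: "(a,b)\<in>R" "i = g a" "j = g b" "(a',b')\<in>R" "i = g a'" "k = g b'" by auto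
    then have "a = a'" using inj sub by blast
    then show "j = k" using fw h by blast
  next
    fix i j k assume "(i,k) \<in> map_prod g g ` R" "(j,k) \<in> map_prod g g ` R"
    then obtain a b a' b' where h: "(a,b)\<in>R" "i = g a" "k = g b" "(a',b')\<in>R" "j = g a'" "k = g b'" by auto
    then have "b = b'" using inj sub by blast
    then show "i = j" using bw h by blast
  qed
qed

lemma map_en3:
  assumes g: "\<And>x y. x\<in>A \<Longrightarrow> y\<in>A \<Longrightarrow> x<y \<Longrightarrow> g x < g y" and sub: "R \<subseteq> A \<times> A" and e: "en3 R"
  shows "en3 (map_prod g g ` R)"
proof -
  obtain i1 j1 i2 j2 i3 j3 where h: "(i1,j1)\<in>R" "(i2,j2)\<in>R" "(i3,j3)\<in>R"
      "i1 < i2" "i2 < i3" "i3 \<le> j1" "j1 < j2" "j2 < j3" using e unfolding en3_def by blast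
  have A: "i1\<in>A" "j1\<in>A" "i2\<in>A" "j2\<in>A" "i3\<in>A" "j3\<in>A" using h sub by auto
  have le: "g i3 \<le> g j1" using h(6) g[OF A(5) A(2)] by (cases "i3 = j1") auto
  show ?thesis unfolding en3_def
    apply (rule exI[of _ "g i1"], rule exI[of _ "g j1"], rule exI[of _ "g i2"], rule exI[of _ "g j2"],
           rule exI[of _ "g i3"], rule exI[of _ "g j3"])
    using h A g le by (auto intro: rev_image_eqI)
qed

lemma img_id:
  assumes "\<And>x. x\<in>A \<Longrightarrow> g (h x) = x" "R \<subseteq> A \<times> A"
  shows "map_prod g g ` map_prod h h ` R = R"
proof (intro set_eqI iffI)
  fix p assume "p \<in> map_prod g g ` map_prod h h ` R"
  then obtain a b where ab: "(a,b)\<in>R" "p = (g (h a), g (h b))" by auto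
  then have "a \<in> A" "b \<in> A" using assms(2) by auto
  then show "p \<in> R" using assms(1) ab by simp
next
  fix p assume pR: "p \<in> R"
  obtain a b where p: "p = (a,b)" by (cases p)
  have ab: "a \<in> A" "b \<in> A" using assms(2) pR p by auto
  have e: "map_prod g g (map_prod h h (a,b)) = p" using assms(1)[OF ab(1)] assms(1)[OF ab(2)] p by simp
  have "map_prod h h (a,b) \<in> map_prod h h ` R" using pR p by (intro imageI) simp
  then have "map_prod g g (map_prod h h (a,b)) \<in> map_prod g g ` map_prod h h ` R" by (rule imageI)
  then show "p \<in> map_prod g g ` map_prod h h ` R" using e by simp
qed

lemma relabel_gen:
  assumes bij: "bij_betw g A B" and g: "\<And>x y. x\<in>A \<Longrightarrow> y\<in>A \<Longrightarrow> x<y \<Longrightarrow> g x < g y"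
  shows "card (Good A) = card (Good B)"
proof -
  define h where "h = inv_into A g"
  have bh: "bij_betw h B A" using bij_betw_inv_into[OF bij] h_def by simp
  have gh: "\<And>x. x\<in>B \<Longrightarrow> g (h x) = x" using bij h_def by (meson bij_betw_inv_into_right)
  have hg: "\<And>x. x\<in>A \<Longrightarrow> h (g x) = x" using bij h_def by (meson bij_betw_inv_into_left)
  have gA: "g ` A = B" and hB: "h ` B = A" using bij bh by (auto simp: bij_betw_def)
  have hB2: "\<And>x. x\<in>B \<Longrightarrow> h x \<in> A" using hB by blast
  have h: "\<And>x y. x\<in>B \<Longrightarrow> y\<in>B \<Longrightarrow> x<y \<Longrightarrow> h x < h y"
  proof -
    fix x y assume xy: "x\<in>B" "y\<in>B" "x<y"
    show "h x < h y"
    proof (rule ccontr)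
      assume "\<not> h x < h y"
      then have "h y \<le> h x" by simp
      then have "g (h y) \<le> g (h x)" using g[OF hB2[OF xy(2)] hB2[OF xy(1)]] by (cases "h y = h x") auto
      then show False using gh xy by simp
    qed
  qed
  have "bij_betw (\<lambda>R. map_prod g g ` R) (Good A) (Good B)"
  proof (rule bij_betw_byWitness[where f' = "\<lambda>R. map_prod h h ` R"])
    show "\<forall>a\<in>Good A. map_prod h h ` map_prod g g ` a = a"
    proof
      fix R assume "R \<in> Good A"
      then have RA: "R \<subseteq> A \<times> A" by (simp add: Good_def arcrel_def)
      show "map_prod h h ` map_prod g g ` R = R" by (rule img_id[of A h g R]) (fact hg, fact RA)
    qed
    show "\<forall>a\<in>Good B. map_prod g g ` map_prod h h ` a = a"
    proof
      fix R assume "R \<in> Good B"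
      then have RB: "R \<subseteq> B \<times> B" by (simp add: Good_def arcrel_def)
      show "map_prod g g ` map_prod h h ` R = R" by (rule img_id[of B g h R]) (fact gh, fact RB)
    qed
    show "(\<lambda>R. map_prod g g ` R) ` Good A \<subseteq> Good B"
    proof
      fix R' assume "R' \<in> (\<lambda>R. map_prod g g ` R) ` Good A"
      then obtain R where R: "R \<in> Good A" "R' = map_prod g g ` R" by blast
      have ar: "arcrel A R" using R by (simp add: Good_def)
      have "arcrel B R'" using map_arcrel[of A g R, OF g ar] gA R by simp
      moreover have "\<not> en3 R'"
      proof
        assume "en3 R'"
        moreover have "R' \<subseteq> B \<times> B" using \<open>arcrel B R'\<close> by (simp add: arcrel_def)
        ultimately have "en3 (map_prod h h ` R')" using map_en3[of B h, OF h] by blast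
        moreover have "map_prod h h ` R' = R"
        proof -
          have RA: "R \<subseteq> A \<times> A" using ar by (simp add: arcrel_def)
          have "map_prod h h ` map_prod g g ` R = R" by (rule img_id[of A h g R]) (fact hg, fact RA)
          then show ?thesis using R(2) by simp
        qed
        ultimately show False using R by (simp add: Good_def)
      qed
      ultimately show "R' \<in> Good B" by (simp add: Good_def)
    qed
    show "(\<lambda>R. map_prod h h ` R) ` Good B \<subseteq> Good A"
    proof
      fix R' assume "R' \<in> (\<lambda>R. map_prod h h ` R) ` Good B"
      then obtain R where R: "R \<in> Good B" "R' = map_prod h h ` R" by blast
      have ar: "arcrel B R" using R by (simp add: Good_def)
      have "arcrel A R'" using map_arcrel[of B h R, OF h ar] hB R by simp
      moreover have "\<not> en3 R'"
      proof
        assume "en3 R'"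
        moreover have "R' \<subseteq> A \<times> A" using \<open>arcrel A R'\<close> by (simp add: arcrel_def)
        ultimately have "en3 (map_prod g g ` R')" using map_en3[of A g, OF g] by blast
        moreover have "map_prod g g ` R' = R"
        proof -
          have RB: "R \<subseteq> B \<times> B" using ar by (simp add: arcrel_def)
          have "map_prod g g ` map_prod h h ` R = R" by (rule img_id[of B g h R]) (fact gh, fact RB)
          then show ?thesis using R(2) by simp
        qed
        ultimately show False using R by (simp add: Good_def)
      qed
      ultimately show "R' \<in> Good A" by (simp add: Good_def)
    qed
  qed
  then show ?thesis by (rule bij_betw_same_card)
qed

lemma relabel:
  assumes fin: "finite S"
  shows "card (Good S) = card (Good {1..card S})"
proof -
  obtain xs where xs: "sorted_wrt (<) xs" "set xs = S"
    using ex1_sorted_list_for_set_if_finite[OF fin] by blast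
  have dist: "distinct xs" using xs(1) by (simp add: strict_sorted_iff)
  have len: "length xs = card S" using dist xs(2) distinct_card by fastforce
  define g where "g i = xs ! (i - 1)" for i
  have mono: "\<And>x y. x\<in>{1..card S} \<Longrightarrow> y\<in>{1..card S} \<Longrightarrow> x<y \<Longrightarrow> g x < g y"
    unfolding g_def using sorted_wrt_nth_less[OF xs(1)] len by auto
  have inj: "inj_on g {1..card S}"
  proof (rule inj_onI)
    fix x y assume "x \<in> {1..card S}" "y \<in> {1..card S}" "g x = g y"
    then show "x = y" using mono[of x y] mono[of y x] by (cases x y rule: linorder_cases) auto
  qed
  have img: "g ` {1..card S} = S"
  proof (intro set_eqI iffI)
    fix x assume "x \<in> g ` {1..card S}"
    then show "x \<in> S" using xs(2) len unfolding g_def by auto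
  next
    fix x assume "x \<in> S"
    then obtain m where m: "m < length xs" "xs ! m = x" using xs(2) by (metis in_set_conv_nth)
    then have "g (Suc m) = x" "Suc m \<in> {1..card S}" using len unfolding g_def by auto
    then show "x \<in> g ` {1..card S}" by force
  qed
  have b: "bij_betw g {1..card S} S" using inj img by (simp add: bij_betw_def)
  show ?thesis using relabel_gen[of g "{1..card S}" S, OF b mono] by simp
qed

lemma fin_good: "finite S \<Longrightarrow> finite (Good S)"
  by (rule finite_subset[of _ "Pow (S \<times> S)"]) (auto simp: Good_def arcrel_def)

lemma E3_good: "E3 i = card (Good {1..i})"
  unfolding E3_def Good_def using card_part_arcs[of has_enhanced_3_crossing en3] en3_arcs by blast

lemma C3_arcs: "C3 m = card {Q. arcrel {1..m} Q \<and> \<not> cr3 Q}"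
  unfolding C3_def using card_part_arcs[of has_3_crossing cr3] cr3_arcs by blast

lemma group_sum: "(\<Sum>S\<in>Pow {1..n}. E3 (card S)) = (\<Sum>i = 0..n. (n choose i) * E3 i)"
proof -
  have "(\<Sum>S\<in>Pow {1..n}. E3 (card S)) = (\<Sum>i\<in>{0..n}. \<Sum>S\<in>{S. S \<in> Pow {1..n} \<and> card S = i}. E3 (card S))"
    by (rule sum.group[symmetric]) (auto simp: card_mono[of "{1..n}", simplified])
  also have "\<dots> = (\<Sum>i\<in>{0..n}. (n choose i) * E3 i)"
  proof (rule sum.cong)
    fix i assume "i \<in> {0..n}"
    have "(\<Sum>S\<in>{S. S \<in> Pow {1..n} \<and> card S = i}. E3 (card S)) = (\<Sum>S\<in>{S. S \<subseteq> {1..n} \<and> card S = i}. E3 i)"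
      by (rule sum.cong) auto
    also have "\<dots> = card {S. S \<subseteq> {1..n} \<and> card S = i} * E3 i" by simp
    also have "\<dots> = (n choose i) * E3 i" using n_subsets[of "{1..n}" i] by simp
    finally show "(\<Sum>S\<in>{S. S \<in> Pow {1..n} \<and> card S = i}. E3 (card S)) = (n choose i) * E3 i" .
  qed simp
  finally show ?thesis by simp
qed

theorem mainTheorem2:
  fixes n :: nat
  shows "C3 (n + 1) = (\<Sum>i = 0..n. (n choose i) * E3 i)"
proof -
  have "C3 (n + 1) = card {Q. arcrel {1..Suc n} Q \<and> \<not> cr3 Q}" using C3_arcs by simp
  also have "\<dots> = card (Sigma (Pow {1..n}) Good)" using phi_bij by (rule bij_betw_same_card)
  also have "\<dots> = (\<Sum>S\<in>Pow {1..n}. card (Good S))"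
  proof (rule card_SigmaI)
    show "\<forall>a\<in>Pow {1..n}. finite (Good a)" using fin_good finite_subset[of _ "{1..n}"] by blast
  qed simp
  also have "\<dots> = (\<Sum>S\<in>Pow {1..n}. E3 (card S))"
  proof (rule sum.cong)
    fix S assume "S \<in> Pow {1..n}"
    then have "finite S" using finite_subset[of S "{1..n}"] by simp
    then show "card (Good S) = E3 (card S)" using relabel[of S] E3_good[of "card S"] by simp
  qed simp
  also have "\<dots> = (\<Sum>i = 0..n. (n choose i) * E3 i)" by (rule group_sum)
  finally show ?thesis .
qed

end
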